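(* Let $\overline p$ be a Goresky–MacPherson perversity, let $X$ be an $n$-dimensional filtered space without strata of codimension $1$, and let $x_0$ be a regular point of $X$. Let $$\ell_{\overline p}=\sup\{k\in\overline{\mathbb N}\mid \overline p(k)=\overline t(k)\}=\sup\{k\in\overline{\mathbb N}\mid D\overline p(k)=0\},$$ called the cleaving point of $\overline p$. Then $$\pi_1^{\overline p}(X,x_0)=\pi_1^{\overline t}(X\setminus X_{n-\ell_{\overline p}-1},x_0).$$ Here $X\setminus X_{n-\ell_{\overline p}-1}$ carries the induced filtration and $X_m=\emptyset$ for $m\le-1$.
   Context: Filtered spaces. A filtered space of formal dimension $n$ is a nonempty space $X$ with closed subsets $\emptyset=X_{-1}\subseteq\cdots\subseteq X_{n-1}\subsetneq X_n=X$. Strata are the nonempty connected components of $X_i\setminus X_{i-1}$, with codimension $n-i$. Strata in $X\setminus X_{n-1}$ are regular. An open subset $U$ has the induced filtration $U\cap X_i$. Perversities. A GM perversity is a map $\overline p\colon\{2,3,\dots\}\to\mathbb N$ with $\overline p(2)=0$ and $\overline p(i)\le\overline p(i+1)\le\overline p(i)+1$. On a filtered space without codimension-one strata, it assigns $\overline p(\operatorname{codim}S)$ to each singular stratum $S$ and $0$ to regular strata. The top perversity is $\overline t(k)=k-2$, and $D\overline p(k)=k-2-\overline p(k)$. Full simplices and intersection homotopy groups. A simplex $\sigma\colon\Delta^j\to X$ is $\overline p$-allowable if $\dim\sigma^{-1}S\le j-\operatorname{codim}S+\overline p(S)$ for each singular stratum $S$. Here $\dim$ is polyhedral dimension, i.e.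 the minimal dimension of a polyhedron containing the set, with $\dim\emptyset=-\infty$. A simplex is $\overline p$-full if it and all iterated faces are allowable. The $\overline p$-full simplices form a Kan simplicial subset $\mathscr G_{\overline p}X\subseteq\mathrm{Sing}\,X$, and $\pi_1^{\overline p}(X,x_0)=\pi_1(\mathscr G_{\overline p}X,x_0)$. *)

theory Defs
  imports "HOL-Homology.Homology" "HOL-Library.Extended_Nat"
begin

text \<open>A filtered space of formal dimension n: the filtration is given as a map
  F :: int => 'a set with F i = {} for i <= -1 and F i = topspace X for i >= n
  (so that X_m = {} for m <= -1, as in the paper).\<close>

definition filtered_space :: "'a topology \<Rightarrow> nat \<Rightarrow> (int \<Rightarrow> 'a set) \<Rightarrow> bool" where
  "filtered_space X n F \<longleftrightarrow>
     topspace X \<noteq> {} \<and>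
     (\<forall>i. closedin X (F i)) \<and>
     (\<forall>i. F i \<subseteq> F (i + 1)) \<and>
     (\<forall>i<0. F i = {}) \<and>
     (\<forall>i\<ge>int n. F i = topspace X) \<and>
     F (int n - 1) \<noteq> topspace X"

text \<open>S is a stratum of the filtered space lying in F i - F (i-1), 0 <= i <= n
  (its codimension is n - i).\<close>

definition stratum_at :: "'a topology \<Rightarrow> nat \<Rightarrow> (int \<Rightarrow> 'a set) \<Rightarrow> int \<Rightarrow> 'a set \<Rightarrow> bool" where
  "stratum_at X n F i S \<longleftrightarrow>
     0 \<le> i \<and> i \<le> int n \<and> S \<in> connected_components_of (subtopology X (F i - F (i - 1)))"

definition no_codim_one_strata :: "'a topology \<Rightarrow> nat \<Rightarrow> (int \<Rightarrow> 'a set) \<Rightarrow> bool" where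
  "no_codim_one_strata X n F \<longleftrightarrow> \<not> (\<exists>S. stratum_at X n F (int n - 1) S)"

definition regular_point :: "'a topology \<Rightarrow> nat \<Rightarrow> (int \<Rightarrow> 'a set) \<Rightarrow> 'a \<Rightarrow> bool" where
  "regular_point X n F x \<longleftrightarrow> x \<in> topspace X - F (int n - 1)"

definition gm_perversity :: "(nat \<Rightarrow> nat) \<Rightarrow> bool" where
  "gm_perversity p \<longleftrightarrow> p 2 = 0 \<and> (\<forall>i\<ge>2. p i \<le> p (i + 1) \<and> p (i + 1) \<le> p i + 1)"

definition top_perversity :: "nat \<Rightarrow> nat" where
  "top_perversity k = k - 2"

definition dual_perversity :: "(nat \<Rightarrow> nat) \<Rightarrow> nat \<Rightarrow> nat" where
  "dual_perversity p k = k - 2 - p k"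

definition cleaving_point :: "(nat \<Rightarrow> nat) \<Rightarrow> enat" where
  "cleaving_point p = Sup {enat k | k. 2 \<le> k \<and> p k = top_perversity k}"

text \<open>The ambient space nat => real of the standard simplices is not a real_vector
  instance in the library, so convex hulls and affine independence are written out.\<close>

definition conv_hull_pts :: "(nat \<Rightarrow> real) set \<Rightarrow> (nat \<Rightarrow> real) set" where
  "conv_hull_pts T = {x. \<exists>u. (\<forall>v\<in>T. 0 \<le> u v) \<and> (\<Sum>v\<in>T. u v) = 1 \<and>
                          x = (\<lambda>i. \<Sum>v\<in>T. u v * v i)}"

definition aff_indep_pts :: "(nat \<Rightarrow> real) set \<Rightarrow> bool" where
  "aff_indep_pts T \<longleftrightarrow> (\<forall>u. (\<Sum>v\<in>T. u v) = 0 \<and> (\<lambda>i. \<Sum>v\<in>T. u v * v i) = (\<lambda>i. 0)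
                           \<longrightarrow> (\<forall>v\<in>T. u v = 0))"

text \<open>polydim_le A k: A is contained in a (compact) polyhedron of dimension <= k,
  i.e. a finite union of geometric simplices of dimension <= k. For k < 0 this
  forces A = {} (dim {} = -infinity).\<close>

definition polydim_le :: "(nat \<Rightarrow> real) set \<Rightarrow> int \<Rightarrow> bool" where
  "polydim_le A k \<longleftrightarrow>
     (\<exists>\<F>. finite \<F> \<and> A \<subseteq> \<Union>\<F> \<and>
        (\<forall>P\<in>\<F>. \<exists>T. finite T \<and> aff_indep_pts T \<and> int (card T) \<le> k + 1 \<and> P = conv_hull_pts T))"

definition allowable_simplex ::
  "'a topology \<Rightarrow> nat \<Rightarrow> (int \<Rightarrow> 'a set) \<Rightarrow> (nat \<Rightarrow> nat) \<Rightarrow> nat \<Rightarrow> ((nat \<Rightarrow> real) \<Rightarrow> 'a) \<Rightarrow> bool" where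
  "allowable_simplex X n F p j \<sigma> \<longleftrightarrow>
     singular_simplex j X \<sigma> \<and>
     (\<forall>i S. stratum_at X n F i S \<and> i < int n \<longrightarrow>
        polydim_le {x \<in> standard_simplex j. \<sigma> x \<in> S}
                   (int j - (int n - i) + int (p (nat (int n - i)))))"

fun full_simplex ::
  "'a topology \<Rightarrow> nat \<Rightarrow> (int \<Rightarrow> 'a set) \<Rightarrow> (nat \<Rightarrow> nat) \<Rightarrow> nat \<Rightarrow> ((nat \<Rightarrow> real) \<Rightarrow> 'a) \<Rightarrow> bool" where
  "full_simplex X n F p 0 \<sigma> = allowable_simplex X n F p 0 \<sigma>"
| "full_simplex X n F p (Suc j) \<sigma> =
     (allowable_simplex X n F p (Suc j) \<sigma> \<and>
      (\<forall>k\<le>Suc j. full_simplex X n F p j (singular_face (Suc j) k \<sigma>)))"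

definition const_simplex :: "nat \<Rightarrow> 'a \<Rightarrow> (nat \<Rightarrow> real) \<Rightarrow> 'a" where
  "const_simplex j x0 = restrict (\<lambda>_. x0) (standard_simplex j)"

definition full_loop ::
  "'a topology \<Rightarrow> nat \<Rightarrow> (int \<Rightarrow> 'a set) \<Rightarrow> (nat \<Rightarrow> nat) \<Rightarrow> 'a \<Rightarrow> ((nat \<Rightarrow> real) \<Rightarrow> 'a) \<Rightarrow> bool" where
  "full_loop X n F p x0 \<sigma> \<longleftrightarrow>
     full_simplex X n F p 1 \<sigma> \<and>
     singular_face 1 0 \<sigma> = const_simplex 0 x0 \<and> singular_face 1 1 \<sigma> = const_simplex 0 x0"

text \<open>Homotopy of loops in the Kan complex: sigma ~ tau iff there is a full 2-simplex
  w with d2 w = sigma, d1 w = tau, d0 w = s0 x0 (the degenerate 1-simplex at x0).\<close>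

definition full_loop_rel ::
  "'a topology \<Rightarrow> nat \<Rightarrow> (int \<Rightarrow> 'a set) \<Rightarrow> (nat \<Rightarrow> nat) \<Rightarrow> 'a \<Rightarrow>
   ((nat \<Rightarrow> real) \<Rightarrow> 'a) \<Rightarrow> ((nat \<Rightarrow> real) \<Rightarrow> 'a) \<Rightarrow> bool" where
  "full_loop_rel X n F p x0 \<sigma> \<tau> \<longleftrightarrow>
     (\<exists>\<omega>. full_simplex X n F p 2 \<omega> \<and>
          singular_face 2 2 \<omega> = \<sigma> \<and> singular_face 2 1 \<omega> = \<tau> \<and>
          singular_face 2 0 \<omega> = const_simplex 1 x0)"

definition full_loop_class ::
  "'a topology \<Rightarrow> nat \<Rightarrow> (int \<Rightarrow> 'a set) \<Rightarrow> (nat \<Rightarrow> nat) \<Rightarrow> 'a \<Rightarrow>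
   ((nat \<Rightarrow> real) \<Rightarrow> 'a) \<Rightarrow> ((nat \<Rightarrow> real) \<Rightarrow> 'a) set" where
  "full_loop_class X n F p x0 \<sigma> = {\<tau>. full_loop X n F p x0 \<tau> \<and> full_loop_rel X n F p x0 \<sigma> \<tau>}"

text \<open>The intersection fundamental group pi_1^p(X,x0) = pi_1(G_p X, x0), with the
  standard group law of a Kan complex: [sigma][tau] = [d1 w] for a full 2-simplex w
  with d2 w = sigma, d0 w = tau.\<close>

definition intersection_pi1 ::
  "'a topology \<Rightarrow> nat \<Rightarrow> (int \<Rightarrow> 'a set) \<Rightarrow> (nat \<Rightarrow> nat) \<Rightarrow> 'a \<Rightarrow>
   (((nat \<Rightarrow> real) \<Rightarrow> 'a) set) monoid" where
  "intersection_pi1 X n F p x0 =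
     \<lparr>carrier = full_loop_class X n F p x0 ` Collect (full_loop X n F p x0),
      monoid.mult = (\<lambda>A B. full_loop_class X n F p x0
         (singular_face 2 1 (SOME \<omega>. full_simplex X n F p 2 \<omega> \<and>
              singular_face 2 2 \<omega> \<in> A \<and> singular_face 2 0 \<omega> \<in> B))),
      one = full_loop_class X n F p x0 (const_simplex 1 x0)\<rparr>"

definition cleaved_open :: "'a topology \<Rightarrow> nat \<Rightarrow> (int \<Rightarrow> 'a set) \<Rightarrow> (nat \<Rightarrow> nat) \<Rightarrow> 'a set" where
  "cleaved_open X n F p =
     topspace X - (case cleaving_point p of enat l \<Rightarrow> F (int n - int l - 1) | \<infinity> \<Rightarrow> {})"

end

theory Submission imports Defs begin

lemma gm_step:
  assumes "gm_perversity p" "2 \<le> m" shows "p (Suc m) \<le> p m + 1"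
proof -
  have "\<forall>i\<ge>2. p i \<le> p (i + 1) \<and> p (i + 1) \<le> p i + 1" using assms(1) unfolding gm_perversity_def by (rule conjunct2)
  then have "p (m + 1) \<le> p m + 1" using assms(2) by blast
  then show ?thesis by simp
qed

lemma gm_le_top:
  assumes "gm_perversity p" "2 \<le> k" shows "p k \<le> k - 2"
  using assms(2)
proof (induction k rule: dec_induct)
  case base then show ?case using assms(1) by (simp add: gm_perversity_def)
next
  case (step m)
  have "p (Suc m) \<le> p m + 1" using gm_step[OF assms(1) step(1)] .
  then show ?case using step(1,3) by linarith
qed

lemma gm_down:
  assumes "gm_perversity p" "2 \<le> k" "k \<le> m" "p m = m - 2" shows "p k = k - 2"
  using assms(3,4)
proof (induction m rule: dec_induct)
  case base then show ?case by simp
next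
  case (step m)
  have m2: "2 \<le> m" using step(1) assms(2) by linarith
  have "p (Suc m) \<le> p m + 1" using gm_step[OF assms(1) m2] .
  moreover have "p m \<le> m - 2" using gm_le_top[OF assms(1) m2] .
  ultimately have "p m = m - 2" using step(4) m2 by linarith
  then show ?case using step(3) by blast
qed

lemma cleaving_iff:
  assumes "gm_perversity p" "2 \<le> k"
  shows "p k = top_perversity k \<longleftrightarrow> enat k \<le> cleaving_point p"
proof
  assume "p k = top_perversity k"
  then have "enat k \<in> {enat k |k. 2 \<le> k \<and> p k = top_perversity k}" using assms(2) by blast
  then show "enat k \<le> cleaving_point p" unfolding cleaving_point_def by (rule Sup_upper)
next
  assume a: "enat k \<le> cleaving_point p"
  show "p k = top_perversity k"
  proof (rule ccontr)
    assume nk: "p k \<noteq> top_perversity k"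
    have "cleaving_point p \<le> enat (k - 1)" unfolding cleaving_point_def
    proof (rule Sup_least)
      fix x assume "x \<in> {enat k |k. 2 \<le> k \<and> p k = top_perversity k}"
      then obtain m where m: "x = enat m" "2 \<le> m" "p m = top_perversity m" by blast
      have "m < k"
      proof (rule ccontr)
        assume "\<not> m < k"
        then have km: "k \<le> m" by simp
        have "p m = m - 2" using m(3) unfolding top_perversity_def .
        then have "p k = k - 2" using gm_down[OF assms(1,2) km] by blast
        then show False using nk unfolding top_perversity_def by blast
      qed
      then show "x \<le> enat (k - 1)" using m(1) by simp
    qed
    with a have "enat k \<le> enat (k - 1)" by (rule order.trans)
    then show False using assms(2) by simp
  qed
qed

lemma conv_hull_empty: "conv_hull_pts {} = {}"
  unfolding conv_hull_pts_def by simp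

lemma polydim_neg: "k < 0 \<Longrightarrow> polydim_le A k \<Longrightarrow> A = {}"
proof -
  assume k: "k < 0" and "polydim_le A k"
  then obtain \<F> where F: "A \<subseteq> \<Union>\<F>" and F2: "\<And>P. P \<in> \<F> \<Longrightarrow> \<exists>T. finite T \<and> aff_indep_pts T \<and> int (card T) \<le> k + 1 \<and> P = conv_hull_pts T"
    unfolding polydim_le_def by auto
  have "P = {}" if P: "P \<in> \<F>" for P
  proof -
    obtain T where T: "finite T" "int (card T) \<le> k + 1" "P = conv_hull_pts T" using F2[OF P] by auto
    have "card T = 0" using T(2) k by linarith
    then have "T = {}" using T(1) by simp
    then show ?thesis using T(3) conv_hull_empty by simp
  qed
  then show "A = {}" using F by blast
qed

lemma polydim_empty: "polydim_le {} k"
  unfolding polydim_le_def by (rule exI[of _ "{}"]) simp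

lemma mono_F:
  assumes "\<forall>i. F i \<subseteq> F (i + 1)" "(i::int) \<le> j" shows "F i \<subseteq> F j"
proof -
  have "\<And>m::nat. F i \<subseteq> F (i + int m)"
  proof -
    fix m :: nat show "F i \<subseteq> F (i + int m)"
    proof (induction m)
      case (Suc m)
      have "F (i + int m) \<subseteq> F (i + int m + 1)" using assms(1) by blast
      moreover have "i + int (Suc m) = i + int m + 1" by simp
      ultimately show ?case using Suc by (metis order_trans)
    qed simp
  qed
  from this[of "nat (j - i)"] assms(2) show ?thesis by simp
qed

lemma allow_eq:
  assumes fs: "filtered_space X n F" and gm: "gm_perversity p"
    and nc: "no_codim_one_strata X n F" and j: "j \<le> 2"
  shows "allowable_simplex X n F p j \<sigma> =
    allowable_simplex (subtopology X (cleaved_open X n F p)) n (\<lambda>i. cleaved_open X n F p \<inter> F i) top_perversity j \<sigma>"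
proof -
  define U where "U = cleaved_open X n F p"
  define l where "l = cleaving_point p"
  define Y where "Y = subtopology X U"
  define G where "G = (\<lambda>i. U \<inter> F i)"
  have Fsub: "\<And>i. F i \<subseteq> topspace X" using fs by (simp add: filtered_space_def closedin_subset)
  have Fm1: "\<forall>i. F i \<subseteq> F (i + 1)" using fs unfolding filtered_space_def by blast
  have mono: "\<And>i k. i \<le> k \<Longrightarrow> F i \<subseteq> F k" by (rule mono_F[OF Fm1])
  have Fneg: "\<And>i. i < 0 \<Longrightarrow> F i = {}" using fs unfolding filtered_space_def by blast
  have Uenat: "\<And>l'. l = enat l' \<Longrightarrow> U = topspace X - F (int n - int l' - 1)"
    by (simp add: U_def l_def cleaved_open_def)
  have Uinf: "l = \<infinity> \<Longrightarrow> U = topspace X"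
    by (simp add: U_def l_def cleaved_open_def)
  have Usub: "U \<subseteq> topspace X" by (cases l) (auto simp: Uenat Uinf)
  have small_in: "F i - F (i - 1) \<subseteq> U" if "enat (nat (int n - i)) \<le> l" for i
  proof (cases l)
    case (enat l')
    with that have "nat (int n - i) \<le> l'" by simp
    then have "int n - int l' - 1 \<le> i - 1" by linarith
    then have "F (int n - int l' - 1) \<subseteq> F (i - 1)" by (rule mono)
    then show ?thesis using Fsub[of i] by (auto simp: Uenat[OF enat])
  next
    case infinity
    then show ?thesis using Fsub[of i] by (simp add: Uinf; blast)
  qed
  have big_out: "U \<inter> F i = {}" if "\<not> enat (nat (int n - i)) \<le> l" for i
  proof (cases l)
    case (enat l')
    with that have "nat (int n - i) > l'" by simp
    then have "i \<le> int n - int l' - 1" by linarith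
    then have "F i \<subseteq> F (int n - int l' - 1)" by (rule mono)
    then show ?thesis by (auto simp: Uenat[OF enat])
  next
    case infinity
    then show ?thesis using that by simp
  qed
  have codim: "2 \<le> nat (int n - i)" if "stratum_at X n F i S" "i < int n" for i S
  proof (rule ccontr)
    assume "\<not> 2 \<le> nat (int n - i)"
    then have "i = int n - 1" using that(2) by linarith
    then show False using nc that(1) unfolding no_codim_one_strata_def by blast
  qed
  have sub_eq: "subtopology Y (G i - G (i - 1)) = subtopology X (U \<inter> (F i - F (i - 1)))" for i
    unfolding Y_def G_def subtopology_subtopology by (rule arg_cong[where f="subtopology X"]) blast
  have Y_str: "stratum_at X n F i S \<and> enat (nat (int n - i)) \<le> l"
    if "stratum_at Y n G i S" "i < int n" for i S
  proof -
    have S: "S \<in> connected_components_of (subtopology X (U \<inter> (F i - F (i - 1))))"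
      and i: "0 \<le> i" "i \<le> int n"
      using that(1) unfolding stratum_at_def sub_eq by auto
    have "S \<noteq> {}" using S nonempty_connected_components_of by blast
    moreover have "S \<subseteq> U \<inter> F i" using connected_components_of_subset[OF S] by auto
    ultimately have sm: "enat (nat (int n - i)) \<le> l" using big_out by blast
    then have "U \<inter> (F i - F (i - 1)) = F i - F (i - 1)" using small_in by blast
    then show ?thesis using S i sm unfolding stratum_at_def by simp
  qed
  have X_str: "stratum_at Y n G i S"
    if "stratum_at X n F i S" "enat (nat (int n - i)) \<le> l" for i S
  proof -
    have "U \<inter> (F i - F (i - 1)) = F i - F (i - 1)" using small_in that(2) by blast
    then show ?thesis using that(1) unfolding stratum_at_def sub_eq by simp
  qed
  have pt: "p c = top_perversity c" if "2 \<le> c" "enat c \<le> l" for c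
    using cleaving_iff[OF gm that(1)] that(2) l_def by simp
  have pbig: "p c + 3 \<le> c" if "2 \<le> c" "\<not> enat c \<le> l" for c
  proof -
    have "p c \<noteq> c - 2" using cleaving_iff[OF gm that(1)] that(2) l_def by (simp add: top_perversity_def)
    moreover have "p c \<le> c - 2" using gm_le_top[OF gm that(1)] .
    ultimately show ?thesis using that(1) by linarith
  qed
  have cover: "\<exists>i S. stratum_at X n F i S \<and> i < int n \<and> \<not> enat (nat (int n - i)) \<le> l \<and> y \<in> S"
    if y: "y \<in> topspace X" "y \<notin> U" for y
  proof (cases l)
    case infinity
    then show ?thesis using y Uinf by simp
  next
    case (enat l')
    have yF: "y \<in> F (int n - int l' - 1)" using y Uenat[OF enat] by simp
    have nn: "0 \<le> int n - int l' - 1"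
    proof (rule ccontr)
      assume "\<not> 0 \<le> int n - int l' - 1"
      then have "F (int n - int l' - 1) = {}" using Fneg by simp
      with yF show False by simp
    qed
    define i0 where "i0 = (LEAST i::nat. y \<in> F (int i))"
    have ex: "y \<in> F (int (nat (int n - int l' - 1)))" using yF nn by simp
    have yi0: "y \<in> F (int i0)" unfolding i0_def by (rule LeastI) (rule ex)
    have i0le: "i0 \<le> nat (int n - int l' - 1)" unfolding i0_def by (rule Least_le) (rule ex)
    have yn: "y \<notin> F (int i0 - 1)"
    proof (cases i0)
      case 0 then show ?thesis using Fneg by simp
    next
      case (Suc m)
      have "\<not> y \<in> F (int m)" using not_less_Least[of m "\<lambda>i. y \<in> F (int i)"] i0_def Suc by simp
      then show ?thesis using Suc by simp
    qed
    define S where "S = connected_component_of_set (subtopology X (F (int i0) - F (int i0 - 1))) y"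
    have ytop: "y \<in> topspace (subtopology X (F (int i0) - F (int i0 - 1)))" using y yi0 yn by simp
    have Sc: "S \<in> connected_components_of (subtopology X (F (int i0) - F (int i0 - 1)))"
      unfolding S_def by (rule iffD2[OF connected_component_in_connected_components_of ytop])
    have yS: "y \<in> S" unfolding S_def mem_Collect_eq by (rule iffD2[OF connected_component_of_refl ytop])
    have lt: "int i0 < int n" "\<not> enat (nat (int n - int i0)) \<le> l" using i0le nn enat by auto
    have "stratum_at X n F (int i0) S" unfolding stratum_at_def using Sc lt(1) by simp
    then show ?thesis using lt yS by blast
  qed
  have img: "\<sigma> ` standard_simplex j \<subseteq> topspace X" if "singular_simplex j X \<sigma>"
    using that continuous_map_image_subset_topspace unfolding singular_simplex_def
    by (metis topspace_standard_simplex)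
  show ?thesis
    unfolding U_def[symmetric] G_def[symmetric] Y_def[symmetric]
  proof
    assume A: "allowable_simplex X n F p j \<sigma>"
    have sing: "singular_simplex j X \<sigma>" using A unfolding allowable_simplex_def by blast
    have inU: "\<sigma> ` standard_simplex j \<subseteq> U"
    proof
      fix z assume "z \<in> \<sigma> ` standard_simplex j"
      then obtain x where x: "x \<in> standard_simplex j" "z = \<sigma> x" by blast
      show "z \<in> U"
      proof (rule ccontr)
        assume "z \<notin> U"
        then obtain i S where iS: "stratum_at X n F i S" "i < int n" "\<not> enat (nat (int n - i)) \<le> l" "z \<in> S"
          using cover img[OF sing] x by blast
        have c2: "2 \<le> nat (int n - i)" using codim iS by blast
        have "p (nat (int n - i)) + 3 \<le> nat (int n - i)" using pbig c2 iS(3) by blast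
        then have neg: "int j - (int n - i) + int (p (nat (int n - i))) < 0" using j iS(2) by linarith
        have "polydim_le {x \<in> standard_simplex j. \<sigma> x \<in> S} (int j - (int n - i) + int (p (nat (int n - i))))"
          using A iS unfolding allowable_simplex_def by blast
        from polydim_neg[OF neg this] x iS(4) show False by blast
      qed
    qed
    show "allowable_simplex Y n G top_perversity j \<sigma>"
      unfolding allowable_simplex_def
    proof (intro conjI allI impI)
      show "singular_simplex j Y \<sigma>" unfolding Y_def singular_simplex_subtopology using sing inU by blast
    next
      fix i S assume a: "stratum_at Y n G i S \<and> i < int n"
      then have b: "stratum_at X n F i S" "enat (nat (int n - i)) \<le> l" using Y_str by blast+
      have eq: "p (nat (int n - i)) = top_perversity (nat (int n - i))" using pt codim b a by blast
      have "polydim_le {x \<in> standard_simplex j. \<sigma> x \<in> S}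
          (int j - (int n - i) + int (p (nat (int n - i))))"
        using A a b unfolding allowable_simplex_def by blast
      from this[unfolded eq] show "polydim_le {x \<in> standard_simplex j. \<sigma> x \<in> S}
          (int j - (int n - i) + int (top_perversity (nat (int n - i))))" .
    qed
  next
    assume A: "allowable_simplex Y n G top_perversity j \<sigma>"
    have "singular_simplex j Y \<sigma>" using A unfolding allowable_simplex_def by blast
    then have sing: "singular_simplex j X \<sigma>" and inU: "\<sigma> ` standard_simplex j \<subseteq> U"
      unfolding Y_def singular_simplex_subtopology by blast+
    show "allowable_simplex X n F p j \<sigma>"
      unfolding allowable_simplex_def
    proof (intro conjI allI impI)
      show "singular_simplex j X \<sigma>" by (rule sing)
    next
      fix i S assume a: "stratum_at X n F i S \<and> i < int n"
      have c2: "2 \<le> nat (int n - i)" using codim a by blast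
      show "polydim_le {x \<in> standard_simplex j. \<sigma> x \<in> S}
          (int j - (int n - i) + int (p (nat (int n - i))))"
      proof (cases "enat (nat (int n - i)) \<le> l")
        case True
        then have st: "stratum_at Y n G i S" using X_str a by blast
        have eq: "p (nat (int n - i)) = top_perversity (nat (int n - i))" using pt c2 True by blast
        have "polydim_le {x \<in> standard_simplex j. \<sigma> x \<in> S}
          (int j - (int n - i) + int (top_perversity (nat (int n - i))))"
          using A a st unfolding allowable_simplex_def by blast
        then show ?thesis unfolding eq .
      next
        case False
        have "S \<subseteq> F i" using a connected_components_of_subset unfolding stratum_at_def by fastforce
        then have "{x \<in> standard_simplex j. \<sigma> x \<in> S} = {}" using big_out[OF False] inU by blast
        then show ?thesis by (simp only: polydim_empty)
      qed
    qed
  qed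
qed


lemma full_eq:
  assumes fs: "filtered_space X n F" and gm: "gm_perversity p"
    and nc: "no_codim_one_strata X n F"
  shows "j \<le> 2 \<Longrightarrow> full_simplex X n F p j \<sigma> =
    full_simplex (subtopology X (cleaved_open X n F p)) n (\<lambda>i. cleaved_open X n F p \<inter> F i) top_perversity j \<sigma>"
proof (induction j arbitrary: \<sigma>)
  case 0 then show ?case using allow_eq[OF assms] by simp
next
  case (Suc j) then show ?case using allow_eq[OF assms, of "Suc j"] by simp
qed

theorem mainTheorem9:
  fixes X :: "'a topology" and n :: nat and F :: "int \<Rightarrow> 'a set"
    and p :: "nat \<Rightarrow> nat" and x0 :: 'a
  assumes "filtered_space X n F"
    and "gm_perversity p"
    and "no_codim_one_strata X n F"
    and "regular_point X n F x0"
  shows "intersection_pi1 X n F p x0 \<cong>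
         intersection_pi1 (subtopology X (cleaved_open X n F p)) n
           (\<lambda>i. cleaved_open X n F p \<inter> F i) top_perversity x0"
proof -
  have e1: "full_simplex X n F p 1 = full_simplex (subtopology X (cleaved_open X n F p)) n (\<lambda>i. cleaved_open X n F p \<inter> F i) top_perversity 1"
    by (rule ext, rule full_eq[OF assms(1-3)]) simp
  have e2: "full_simplex X n F p 2 = full_simplex (subtopology X (cleaved_open X n F p)) n (\<lambda>i. cleaved_open X n F p \<inter> F i) top_perversity 2"
    by (rule ext, rule full_eq[OF assms(1-3)]) simp
  have "intersection_pi1 X n F p x0 = intersection_pi1 (subtopology X (cleaved_open X n F p)) n
           (\<lambda>i. cleaved_open X n F p \<inter> F i) top_perversity x0"
    unfolding intersection_pi1_def full_loop_class_def full_loop_def full_loop_rel_def e1 e2 ..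
  then show ?thesis by simp
qed

end
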